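(* Let $X$ be a path-connected Hausdorff space and let $m,l\in X$. Then the lion has a strategy in $X$ for the starting points $m$ (man) and $l$ (lion).
   Context: For a topological space $X$ and $x\in X$, let $P_x(X)$ be the set of continuous maps $\gamma:[0,+\infty)\to X$ with $\gamma(0)=x$. For $\gamma\in P_x(X)$ and $t\ge 0$, write $\gamma_{<t}=\gamma|_{[0,t)}$ and $\gamma_{\le t}=\gamma|_{[0,t]}$. Given starting points $m$ (man) and $l$ (lion) in $X$, a strategy for the lion is a function $S:P_m(X)\to P_l(X)$ such that (i) for each $\alpha\in P_m(X)$ there exists $t\ge 0$ with $S(\alpha)(t)=\alpha(t)$; and (ii) (no-lookahead rule) whenever $\alpha,\alpha'\in P_m(X)$ and $t\ge0$ satisfy $\alpha_{<t}=\alpha'_{<t}$, then $S(\alpha)_{\le t}=S(\alpha')_{\le t}$. *)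

theory Defs
  imports "HOL-Analysis.Analysis"
begin

text \<open>P_x(X): continuous maps [0,+inf) -> X starting at x. A map is represented by a
  total function real => 'a; only its values on [0,+inf) matter.\<close>
definition paths_from :: "'a topology \<Rightarrow> 'a \<Rightarrow> (real \<Rightarrow> 'a) set" where
  "paths_from X x = {\<gamma>. continuous_map (top_of_set {0..}) X \<gamma> \<and> \<gamma> 0 = x}"

definition lion_strategy ::
  "'a topology \<Rightarrow> 'a \<Rightarrow> 'a \<Rightarrow> ((real \<Rightarrow> 'a) \<Rightarrow> (real \<Rightarrow> 'a)) \<Rightarrow> bool" where
  "lion_strategy X m l S \<longleftrightarrow>
     (\<forall>\<alpha>\<in>paths_from X m. S \<alpha> \<in> paths_from X l) \<and>
     (\<forall>\<alpha>\<in>paths_from X m. \<exists>t\<ge>0. S \<alpha> t = \<alpha> t) \<and>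
     (\<forall>\<alpha>\<in>paths_from X m. \<forall>\<alpha>'\<in>paths_from X m. \<forall>t\<ge>0.
        (\<forall>s\<in>{0..<t}. \<alpha> s = \<alpha>' s) \<longrightarrow> (\<forall>s\<in>{0..t}. S \<alpha> s = S \<alpha>' s))"

end

theory Submission
  imports Defs
begin

lemma agree_at_end:
  assumes H: "Hausdorff_space X"
    and a: "continuous_map (top_of_set {0..}) X \<alpha>"
    and b: "continuous_map (top_of_set {0..}) X \<beta>"
    and eq: "\<forall>s\<in>{0..<t}. \<alpha> s = \<beta> s" and t: "(t::real) > 0"
  shows "\<alpha> t = \<beta> t"
proof (rule forall_in_closure_of_eq[OF _ H a b])
  show "t \<in> (top_of_set {0..}) closure_of {0..<t}"
    using t proof -
      have "{0..} \<inter> {0..<t} = {0..<t}" by auto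
      then show ?thesis using t by (simp add: closure_of_subtopology closure_atLeastLessThan)
    qed
  show "\<And>x. x \<in> {0..<t} \<Longrightarrow> \<alpha> x = \<beta> x" using eq by blast
qed

theorem mainTheorem1:
  fixes X :: "'a topology" and m l :: 'a
  assumes "path_connected_space X" and "Hausdorff_space X"
    and "m \<in> topspace X" and "l \<in> topspace X"
  shows "\<exists>S. lion_strategy X m l S"
proof -
  obtain p where p: "pathin X p" "p 0 = l" "p 1 = m"
    using assms unfolding path_connected_space_def by blast
  define S where "S \<alpha> t = (if t \<le> 1 then p t else \<alpha> (min t (2 * t - 2)))" for \<alpha> :: "real \<Rightarrow> 'a" and t
  have cont: "S \<alpha> \<in> paths_from X l" if "\<alpha> \<in> paths_from X m" for \<alpha>
  proof -
    have a: "continuous_map (top_of_set {0..}) X \<alpha>" "\<alpha> 0 = m"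
      using that by (auto simp: paths_from_def)
    have "continuous_map (top_of_set {0..}) X (\<lambda>t. if id t \<le> 1 then p t else \<alpha> (min t (2 * t - 2)))"
    proof (rule continuous_map_cases_le)
      show "continuous_map (top_of_set {0..}) euclideanreal id" by simp
      show "continuous_map (top_of_set {0..}) euclideanreal (\<lambda>x. 1)" by simp
      have e: "{x. x \<in> topspace (top_of_set {0::real..}) \<and> id x \<le> 1} = {0..1}" by auto
      show "continuous_map (subtopology (top_of_set {0..}) {x. x \<in> topspace (top_of_set {0..}) \<and> id x \<le> 1}) X p"
        using p(1) unfolding e pathin_def by (simp add: subtopology_subtopology)
      have e2: "{x. x \<in> topspace (top_of_set {0::real..}) \<and> 1 \<le> id x} = {1..}" by auto
      have c1: "continuous_map (top_of_set {1..}) (top_of_set {0::real..}) (\<lambda>t. min t (2 * t - 2))"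
        by (auto simp: continuous_map_in_subtopology intro!: continuous_intros)
      show "continuous_map (subtopology (top_of_set {0..}) {x. x \<in> topspace (top_of_set {0..}) \<and> 1 \<le> id x}) X (\<lambda>t. \<alpha> (min t (2 * t - 2)))"
        unfolding e2 subtopology_subtopology
        using continuous_map_compose[OF c1 a(1)] by (simp add: o_def Int_absorb1)
      show "\<And>x. x \<in> topspace (top_of_set {0..}) \<Longrightarrow> id x = 1 \<Longrightarrow> p x = \<alpha> (min x (2 * x - 2))"
        using p a by auto
    qed
    then show ?thesis using p by (simp add: paths_from_def S_def[abs_def])
  qed
  have "lion_strategy X m l S"
    unfolding lion_strategy_def
  proof (intro conjI ballI allI impI)
    fix \<alpha> assume "\<alpha> \<in> paths_from X m" then show "S \<alpha> \<in> paths_from X l" by (rule cont)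
  next
    fix \<alpha> assume "\<alpha> \<in> paths_from X m"
    show "\<exists>t\<ge>0. S \<alpha> t = \<alpha> t" by (rule exI[of _ 2]) (simp add: S_def)
  next
    fix \<alpha> \<alpha>' and t :: real and s
    assume A: "\<alpha> \<in> paths_from X m" "\<alpha>' \<in> paths_from X m" "t \<ge> 0"
      "\<forall>s\<in>{0..<t}. \<alpha> s = \<alpha>' s" "s \<in> {0..t}"
    show "S \<alpha> s = S \<alpha>' s"
    proof (cases "s \<le> 1")
      case True then show ?thesis by (simp add: S_def)
    next
      case False
      define u where "u = min s (2 * s - 2)"
      have u: "0 \<le> u" "u \<le> t" using False A(5) by (auto simp: u_def)
      have "\<alpha> u = \<alpha>' u"
      proof (cases "u < t")
        case True then show ?thesis using A(4) u by auto
      next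
        case False
        then have "u = t" using u by auto
        moreover have "\<alpha> t = \<alpha>' t"
          by (rule agree_at_end[OF assms(2)]) (use A u \<open>u = t\<close> \<open>\<not> s \<le> 1\<close> in \<open>auto simp: paths_from_def u_def\<close>)
        ultimately show ?thesis by simp
      qed
      then show ?thesis using False by (simp add: S_def u_def)
    qed
  qed
  then show ?thesis by blast
qed

end
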